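(* Fix a general instance satisfying the unique-default-action assumption, with default action $a_0$ and margin $\delta_{\mu_0}>0$. 1. The set $S$ is an upper interval of $[0,1]$: if $\beta\in S$ and $\beta\le\beta'\le1$, then $\beta'\in S$. 2. Every $\beta\in S$ satisfies $\beta\ge\delta_{\mu_0}/\sqrt2$. Hence $\alpha_{\min}:=\inf S\ge\delta_{\mu_0}/\sqrt2$ whenever $S\neq\emptyset$. 3. For $\beta\in(0,1]$, if the threshold-test LP at $\beta$ has a feasible solution with strictly positive objective, then its optimal value is at least $\delta_{\mu_0}/\sqrt2$.
   Context: Finite $\Omega$ and $A$, full-support prior $\mu_0\in\Delta(\Omega)$, receiver utility $u_R$, and $\Delta u_{a,a'}(\omega)=u_R(a,\omega)-u_R(a',\omega)$. Unique-default-action assumption: $\arg\max_a\sum_\omega\mu_0(\omega)u_R(a,\omega)=\{a_0\}$. Margin. Let $R_{a_0}^1=\{\nu\in\Delta(\Omega):\Delta u_{a_0,a'}^\top\nu\ge0\ \forall a'\ne a_0\}$. Define $\delta_{\mu_0}=\min\{\mathrm{dist}(\mu_0,\partial R^1_{a_0}),\mathrm{dist}(\mu_0,\partial\Delta(\Omega))\}$, with Euclidean distances and boundaries relative to the affine hull of the simplex. This is positive under the assumptions. The set $S$ consists of all $\beta\in[0,1]$ for which there exist $a\ne a_0$ and $\nu\in\Delta(\Omega)$ with $\Delta u_{a,a_0}^\top\big((1-\beta)\mu_0+\beta\nu\big)=0$. Threshold-test LP at $\beta$: variables $\pi(a\mid\omega)\ge0$ with $\sum_a\pi(a\mid\omega)=1$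 for all $\omega$. Objective: maximize $\sum_{a\ne a_0}\sum_\omega\pi(a\mid\omega)\mu_0(\omega)$. Constraints: - For all $a$ and all $a'\neq a$: $\sum_\omega\pi(a\mid\omega)\mu_0(\omega)\big[\beta\Delta u_{a,a'}(\omega)+(1-\beta)\sum_{\omega'}\mu_0(\omega')\Delta u_{a,a'}(\omega')\big]\ge0$. - For all $a\ne a_0$: the same expression with $a'=a_0$ equals $0$. *)

theory Defs
  imports "HOL-Analysis.Analysis"
begin

definition belief_simplex :: "(real^'w::finite) set" where
  "belief_simplex = {\<nu>. (\<forall>\<omega>. 0 \<le> \<nu> $ \<omega>) \<and> (\<Sum>\<omega>\<in>UNIV. \<nu> $ \<omega>) = 1}"

definition du :: "('a \<Rightarrow> 'w::finite \<Rightarrow> real) \<Rightarrow> 'a \<Rightarrow> 'a \<Rightarrow> real^'w" where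
  "du u a a' = (\<chi> \<omega>. u a \<omega> - u a' \<omega>)"

definition expected_utility :: "('a \<Rightarrow> 'w::finite \<Rightarrow> real) \<Rightarrow> real^'w \<Rightarrow> 'a \<Rightarrow> real" where
  "expected_utility u \<mu> a = (\<Sum>\<omega>\<in>UNIV. \<mu> $ \<omega> * u a \<omega>)"

definition default_region :: "('a \<Rightarrow> 'w::finite \<Rightarrow> real) \<Rightarrow> 'a \<Rightarrow> (real^'w) set" where
  "default_region u a0 = {\<nu>\<in>belief_simplex. \<forall>a'. a' \<noteq> a0 \<longrightarrow> du u a0 a' \<bullet> \<nu> \<ge> 0}"

definition rel_bd :: "(real^'w::finite) set \<Rightarrow> (real^'w) set" where
  "rel_bd S = (subtopology euclidean (affine hull (belief_simplex :: (real^'w) set))) frontier_of S"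

definition margin :: "('a \<Rightarrow> 'w::finite \<Rightarrow> real) \<Rightarrow> real^'w \<Rightarrow> 'a \<Rightarrow> real" where
  "margin u \<mu>0 a0 = min (infdist \<mu>0 (rel_bd (default_region u a0))) (infdist \<mu>0 (rel_bd belief_simplex))"

definition Sset :: "('a \<Rightarrow> 'w::finite \<Rightarrow> real) \<Rightarrow> real^'w \<Rightarrow> 'a \<Rightarrow> real set" where
  "Sset u \<mu>0 a0 = {\<beta>\<in>{0..1}. \<exists>a \<nu>. a \<noteq> a0 \<and> \<nu> \<in> belief_simplex \<and>
      du u a a0 \<bullet> ((1 - \<beta>) *\<^sub>R \<mu>0 + \<beta> *\<^sub>R \<nu>) = 0}"

text \<open>Threshold-test LP at beta; pi a w stands for pi(a | w).\<close>
definition lp_expr :: "('a \<Rightarrow> 'w::finite \<Rightarrow> real) \<Rightarrow> real^'w \<Rightarrow> real \<Rightarrow> ('a \<Rightarrow> 'w \<Rightarrow> real)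
    \<Rightarrow> 'a \<Rightarrow> 'a \<Rightarrow> real" where
  "lp_expr u \<mu>0 \<beta> \<pi> a a' = (\<Sum>\<omega>\<in>UNIV. \<pi> a \<omega> * \<mu>0 $ \<omega> *
      (\<beta> * (du u a a') $ \<omega> + (1 - \<beta>) * (\<Sum>\<omega>'\<in>UNIV. \<mu>0 $ \<omega>' * (du u a a') $ \<omega>')))"

definition lp_feasible :: "('a::finite \<Rightarrow> 'w::finite \<Rightarrow> real) \<Rightarrow> real^'w \<Rightarrow> 'a \<Rightarrow> real
    \<Rightarrow> ('a \<Rightarrow> 'w \<Rightarrow> real) \<Rightarrow> bool" where
  "lp_feasible u \<mu>0 a0 \<beta> \<pi> \<longleftrightarrow>
     (\<forall>a \<omega>. 0 \<le> \<pi> a \<omega>) \<and> (\<forall>\<omega>. (\<Sum>a\<in>UNIV. \<pi> a \<omega>) = 1) \<and>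
     (\<forall>a a'. a' \<noteq> a \<longrightarrow> lp_expr u \<mu>0 \<beta> \<pi> a a' \<ge> 0) \<and>
     (\<forall>a. a \<noteq> a0 \<longrightarrow> lp_expr u \<mu>0 \<beta> \<pi> a a0 = 0)"

definition lp_obj :: "real^'w::finite \<Rightarrow> 'a::finite \<Rightarrow> ('a \<Rightarrow> 'w \<Rightarrow> real) \<Rightarrow> real" where
  "lp_obj \<mu>0 a0 \<pi> = (\<Sum>a\<in>{a. a \<noteq> a0}. \<Sum>\<omega>\<in>UNIV. \<pi> a \<omega> * \<mu>0 $ \<omega>)"

definition lp_value :: "('a::finite \<Rightarrow> 'w::finite \<Rightarrow> real) \<Rightarrow> real^'w \<Rightarrow> 'a \<Rightarrow> real \<Rightarrow> real" where
  "lp_value u \<mu>0 a0 \<beta> = (SUP \<pi>\<in>{\<pi>. lp_feasible u \<mu>0 a0 \<beta> \<pi>}. lp_obj \<mu>0 a0 \<pi>)"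

end

theory Submission
  imports Defs
begin

lemma ball_lemma:
  fixes T :: "(real^'w::finite) set"
  assumes cl: "closed T" and mu: "\<mu> \<in> T" and muA: "\<mu> \<in> affine hull (belief_simplex :: (real^'w) set)"
    and zA: "z \<in> affine hull (belief_simplex :: (real^'w) set)"
    and d: "dist \<mu> z \<le> infdist \<mu> (rel_bd T)"
  shows "z \<in> T"
proof (rule ccontr)
  assume zT: "z \<notin> T"
  let ?A = "affine hull (belief_simplex :: (real^'w) set)"
  let ?X = "subtopology euclidean ?A"
  have seg: "closed_segment \<mu> z \<subseteq> ?A"
    using muA zA by (simp add: closed_segment_subset convex_affine_hull)
  have "connectedin ?X (closed_segment \<mu> z)"
    using seg by (simp add: connectedin_subtopology)
  moreover have "closed_segment \<mu> z \<inter> T \<noteq> {}" using mu by auto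
  moreover have "closed_segment \<mu> z - T \<noteq> {}" using zT by auto
  ultimately have "closed_segment \<mu> z \<inter> ?X frontier_of T \<noteq> {}"
    by (rule connectedin_Int_frontier_of)
  then obtain w where ws: "w \<in> closed_segment \<mu> z" and wf: "w \<in> ?X frontier_of T" by blast
  have "?X frontier_of T \<subseteq> ?X closure_of T" by (simp add: frontier_of_def)
  also have "\<dots> \<subseteq> euclidean closure_of T" by (rule closure_of_subtopology_subset)
  also have "\<dots> = T" using cl by simp
  finally have wT: "w \<in> T" using wf by blast
  hence wz: "w \<noteq> z" using zT by auto
  obtain t where t: "0 \<le> t" "t \<le> 1" "w = (1 - t) *\<^sub>R \<mu> + t *\<^sub>R z"
    using ws by (auto simp: in_segment)
  have t1: "t \<noteq> 1" using t wz by auto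
  have "w - \<mu> = t *\<^sub>R (z - \<mu>)" using t by (simp add: algebra_simps)
  moreover have "dist \<mu> w = norm (w - \<mu>)" by (metis dist_commute dist_norm)
  ultimately have "dist \<mu> w = norm (t *\<^sub>R (z - \<mu>))" by simp
  moreover have "dist \<mu> z = norm (z - \<mu>)" by (metis dist_commute dist_norm)
  ultimately have dw: "dist \<mu> w = t * dist \<mu> z" using t by simp
  have "dist \<mu> z > 0" using mu zT by auto
  hence "dist \<mu> w < dist \<mu> z" using dw t t1 by (simp add: mult_less_cancel_right1)
  moreover have "infdist \<mu> (rel_bd T) \<le> dist \<mu> w"
    using wf by (simp add: rel_bd_def infdist_le)
  ultimately show False using d by linarith
qed


lemma simplex_nonneg: "\<nu> \<in> belief_simplex \<Longrightarrow> 0 \<le> \<nu> $ i"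
  by (simp add: belief_simplex_def)

lemma simplex_sum: "\<nu> \<in> belief_simplex \<Longrightarrow> (\<Sum>\<omega>\<in>UNIV. \<nu> $ \<omega>) = 1"
  by (simp add: belief_simplex_def)

lemma simplex_le1: assumes "\<nu> \<in> belief_simplex" shows "\<nu> $ i \<le> 1"
proof -
  have "\<nu> $ i \<le> (\<Sum>\<omega>\<in>UNIV. \<nu> $ \<omega>)"
    by (rule member_le_sum) (use assms in \<open>auto simp: belief_simplex_def\<close>)
  thus ?thesis using assms by (simp add: belief_simplex_def)
qed

lemma simplex_comb:
  assumes "\<mu> \<in> belief_simplex" "\<nu> \<in> belief_simplex" "0 \<le> t" "t \<le> 1"
  shows "(1 - t) *\<^sub>R \<mu> + t *\<^sub>R \<nu> \<in> belief_simplex"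
proof -
  have "\<forall>\<omega>. 0 \<le> ((1 - t) *\<^sub>R \<mu> + t *\<^sub>R \<nu>) $ \<omega>"
    using assms by (simp add: belief_simplex_def)
  moreover have "(\<Sum>\<omega>\<in>UNIV. ((1 - t) *\<^sub>R \<mu> + t *\<^sub>R \<nu>) $ \<omega>) = 1"
    using assms by (simp add: belief_simplex_def sum.distrib sum_distrib_left[symmetric])
  ultimately show ?thesis by (simp add: belief_simplex_def)
qed

lemma simplex_closed: "closed (belief_simplex :: (real^'w::finite) set)"
proof -
  have eq: "belief_simplex = (\<Inter>\<omega>. {\<nu>::real^'w. 0 \<le> \<nu> $ \<omega>}) \<inter> {\<nu>. (\<Sum>\<omega>\<in>UNIV. \<nu> $ \<omega>) = 1}"
    by (auto simp: belief_simplex_def)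
  have c1: "closed {\<nu>::real^'w. (\<Sum>\<omega>\<in>UNIV. \<nu> $ \<omega>) = 1}"
    by (intro closed_Collect_eq continuous_intros)
  have c2: "closed (\<Inter>\<omega>. {\<nu>::real^'w. 0 \<le> \<nu> $ \<omega>})"
    by (rule closed_INT) (intro ballI closed_Collect_le continuous_intros)
  show ?thesis by (subst eq) (rule closed_Int[OF c2 c1])
qed

lemma region_closed: "closed (default_region u a0 :: (real^'w::finite) set)"
proof -
  have eq: "default_region u a0 = belief_simplex \<inter> (\<Inter>a'\<in>{a'. a' \<noteq> a0}. {\<nu>::real^'w. 0 \<le> du u a0 a' \<bullet> \<nu>})"
    by (auto simp: default_region_def)
  have c2: "closed (\<Inter>a'\<in>{a'. a' \<noteq> a0}. {\<nu>::real^'w. 0 \<le> du u a0 a' \<bullet> \<nu>})"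
    by (rule closed_INT) (intro ballI closed_Collect_le continuous_intros)
  show ?thesis by (subst eq) (rule closed_Int[OF simplex_closed c2])
qed

lemma simplex_norm:
  assumes "\<mu> \<in> belief_simplex" "\<nu> \<in> belief_simplex"
  shows "norm (\<nu> - \<mu>) \<le> sqrt 2"
proof -
  have "\<And>i. ((\<nu> - \<mu>) $ i)\<^sup>2 \<le> \<nu> $ i + \<mu> $ i"
  proof -
    fix i
    have a: "0 \<le> \<nu> $ i" "\<nu> $ i \<le> 1" "0 \<le> \<mu> $ i" "\<mu> $ i \<le> 1"
      using assms simplex_nonneg simplex_le1 by auto
    have "\<nu> $ i * \<nu> $ i \<le> \<nu> $ i" using a by (simp add: mult_left_le)
    moreover have "\<mu> $ i * \<mu> $ i \<le> \<mu> $ i" using a by (simp add: mult_left_le)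
    moreover have "0 \<le> \<nu> $ i * \<mu> $ i" using a by simp
    moreover have "((\<nu> - \<mu>) $ i)\<^sup>2 = \<nu> $ i * \<nu> $ i - 2 * (\<nu> $ i * \<mu> $ i) + \<mu> $ i * \<mu> $ i"
      by (simp add: power2_eq_square algebra_simps)
    ultimately show "((\<nu> - \<mu>) $ i)\<^sup>2 \<le> \<nu> $ i + \<mu> $ i" by linarith
  qed
  hence "(\<Sum>i\<in>UNIV. ((\<nu> - \<mu>) $ i)\<^sup>2) \<le> (\<Sum>i\<in>UNIV. \<nu> $ i + \<mu> $ i)"
    by (rule sum_mono)
  also have "\<dots> = 2" using assms by (simp add: sum.distrib simplex_sum)
  finally have "(\<Sum>i\<in>UNIV. ((\<nu> - \<mu>) $ i)\<^sup>2) \<le> 2" .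
  moreover have "norm (\<nu> - \<mu>) = sqrt (\<Sum>i\<in>UNIV. ((\<nu> - \<mu>) $ i)\<^sup>2)"
    by (simp add: norm_vec_def L2_set_def)
  ultimately show ?thesis by simp
qed

lemma du_inner: "du u a b \<bullet> \<mu> = expected_utility u \<mu> a - expected_utility u \<mu> b"
  by (simp add: du_def inner_vec_def expected_utility_def sum_subtractf algebra_simps)

lemma du_neg: "du u a b = - du u b a"
  by (simp add: du_def vec_eq_iff)

lemma lp_expr_rep:
  assumes h: "\<And>\<omega>. \<pi> b \<omega> * \<mu>0 $ \<omega> = q * \<rho> $ \<omega>" and s: "(\<Sum>\<omega>\<in>UNIV. \<rho> $ \<omega>) = 1"
  shows "lp_expr u \<mu>0 \<beta> \<pi> b a' = q * (du u b a' \<bullet> ((1 - \<beta>) *\<^sub>R \<mu>0 + \<beta> *\<^sub>R \<rho>))"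
proof -
  define f where "f = du u b a'"
  define K where "K = (\<Sum>\<omega>'\<in>UNIV. \<mu>0 $ \<omega>' * f $ \<omega>')"
  have "lp_expr u \<mu>0 \<beta> \<pi> b a' = (\<Sum>\<omega>\<in>UNIV. q * \<rho> $ \<omega> * (\<beta> * f $ \<omega> + (1 - \<beta>) * K))"
    unfolding lp_expr_def f_def[symmetric] K_def[symmetric] using h by simp
  also have "\<dots> = (\<Sum>\<omega>\<in>UNIV. q * \<beta> * (f $ \<omega> * \<rho> $ \<omega>)) + (\<Sum>\<omega>\<in>UNIV. q * (1 - \<beta>) * K * \<rho> $ \<omega>)"
    by (subst sum.distrib[symmetric]) (rule sum.cong, simp_all add: algebra_simps)
  also have "\<dots> = q * \<beta> * (\<Sum>\<omega>\<in>UNIV. f $ \<omega> * \<rho> $ \<omega>) + q * (1 - \<beta>) * K * (\<Sum>\<omega>\<in>UNIV. \<rho> $ \<omega>)"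
    by (simp add: sum_distrib_left)
  also have "\<dots> = q * ((1 - \<beta>) * (f \<bullet> \<mu>0) + \<beta> * (f \<bullet> \<rho>))"
    using s by (simp add: K_def inner_vec_def algebra_simps)
  also have "\<dots> = q * (f \<bullet> ((1 - \<beta>) *\<^sub>R \<mu>0 + \<beta> *\<^sub>R \<rho>))"
    by (simp add: inner_add_right)
  finally show ?thesis by (simp add: f_def)
qed

lemma lp_obj_le1:
  fixes \<pi> :: "'a::finite \<Rightarrow> 'w::finite \<Rightarrow> real"
  assumes f: "lp_feasible u \<mu>0 a0 \<beta> \<pi>" and p: "\<mu>0 \<in> belief_simplex"
  shows "lp_obj \<mu>0 a0 \<pi> \<le> 1"
proof -
  have nn: "\<And>b \<omega>. 0 \<le> \<pi> b \<omega>" and s1: "\<And>\<omega>. (\<Sum>b\<in>UNIV. \<pi> b \<omega>) = 1"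
    using f by (auto simp: lp_feasible_def)
  have "lp_obj \<mu>0 a0 \<pi> \<le> (\<Sum>b\<in>UNIV. \<Sum>\<omega>\<in>UNIV. \<pi> b \<omega> * \<mu>0 $ \<omega>)"
    unfolding lp_obj_def
    by (rule sum_mono2) (auto intro!: sum_nonneg mult_nonneg_nonneg nn simplex_nonneg[OF p])
  also have "\<dots> = (\<Sum>\<omega>\<in>UNIV. (\<Sum>b\<in>UNIV. \<pi> b \<omega>) * \<mu>0 $ \<omega>)"
    by (subst sum.swap) (simp add: sum_distrib_right)
  also have "\<dots> = 1" using s1 p by (simp add: simplex_sum)
  finally show ?thesis .
qed


theorem propositionC1:
  fixes u :: "'a::finite \<Rightarrow> 'w::finite \<Rightarrow> real" and \<mu>0 :: "real^'w" and a0 :: 'a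
  assumes prior: "\<mu>0 \<in> belief_simplex" and full_support: "\<forall>\<omega>. 0 < \<mu>0 $ \<omega>"
    and unique_default: "{a. \<forall>b. expected_utility u \<mu>0 b \<le> expected_utility u \<mu>0 a} = {a0}"
    and margin_pos: "margin u \<mu>0 a0 > 0"
  shows "(\<forall>\<beta> \<beta>'. \<beta> \<in> Sset u \<mu>0 a0 \<and> \<beta> \<le> \<beta>' \<and> \<beta>' \<le> 1 \<longrightarrow> \<beta>' \<in> Sset u \<mu>0 a0)
       \<and> (\<forall>\<beta>\<in>Sset u \<mu>0 a0. \<beta> \<ge> margin u \<mu>0 a0 / sqrt 2)
       \<and> (Sset u \<mu>0 a0 \<noteq> {} \<longrightarrow> Inf (Sset u \<mu>0 a0) \<ge> margin u \<mu>0 a0 / sqrt 2)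
       \<and> (\<forall>\<beta>. 0 < \<beta> \<and> \<beta> \<le> 1 \<and> (\<exists>\<pi>. lp_feasible u \<mu>0 a0 \<beta> \<pi> \<and> lp_obj \<mu>0 a0 \<pi> > 0)
             \<longrightarrow> lp_value u \<mu>0 a0 \<beta> \<ge> margin u \<mu>0 a0 / sqrt 2)"
proof -
  define m where "m = margin u \<mu>0 a0"
  define R where "R = default_region u a0"
  define A where "A = affine hull (belief_simplex :: (real^'w) set)"
  have mpos: "m > 0" using margin_pos by (simp add: m_def)
  have mR: "m \<le> infdist \<mu>0 (rel_bd R)" by (simp add: m_def R_def margin_def)
  have mS: "m \<le> infdist \<mu>0 (rel_bd belief_simplex)" by (simp add: m_def margin_def)
  have muA: "\<mu>0 \<in> A" using prior by (simp add: A_def hull_inc)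
  have inA: "\<And>x. x \<in> belief_simplex \<Longrightarrow> x \<in> A" by (simp add: A_def hull_inc)
  have aff: "\<And>x y t. x \<in> A \<Longrightarrow> y \<in> A \<Longrightarrow> (1 - t) *\<^sub>R x + t *\<^sub>R y \<in> A"
    unfolding A_def by (rule mem_affine[OF affine_affine_hull]) auto
  have a0max: "\<And>b. expected_utility u \<mu>0 b \<le> expected_utility u \<mu>0 a0"
    using unique_default by blast
  have c0: "\<And>a. a \<noteq> a0 \<Longrightarrow> du u a a0 \<bullet> \<mu>0 < 0"
  proof -
    fix a assume "a \<noteq> a0"
    hence "a \<notin> {a. \<forall>b. expected_utility u \<mu>0 b \<le> expected_utility u \<mu>0 a}"
      using unique_default by blast
    hence "\<exists>b. expected_utility u \<mu>0 b > expected_utility u \<mu>0 a" by (auto simp: not_le)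
    then obtain b where "expected_utility u \<mu>0 b > expected_utility u \<mu>0 a" by blast
    with a0max[of b] show "du u a a0 \<bullet> \<mu>0 < 0" by (simp add: du_inner)
  qed
  have c0': "\<And>a. a \<noteq> a0 \<Longrightarrow> du u a0 a \<bullet> \<mu>0 > 0"
    using c0 by (metis du_neg inner_minus_left neg_0_less_iff_less)
  have muR: "\<mu>0 \<in> R"
    using prior a0max by (auto simp: R_def default_region_def du_inner)
  have sqrt2: "sqrt 2 > 0" by simp

  have P1: "\<forall>\<beta> \<beta>'. \<beta> \<in> Sset u \<mu>0 a0 \<and> \<beta> \<le> \<beta>' \<and> \<beta>' \<le> 1 \<longrightarrow> \<beta>' \<in> Sset u \<mu>0 a0"
  proof (intro allI impI)
    fix \<beta> \<beta>' assume h: "\<beta> \<in> Sset u \<mu>0 a0 \<and> \<beta> \<le> \<beta>' \<and> \<beta>' \<le> 1"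
    then obtain a \<nu> where a: "a \<noteq> a0" and nu: "\<nu> \<in> belief_simplex"
      and eq: "du u a a0 \<bullet> ((1 - \<beta>) *\<^sub>R \<mu>0 + \<beta> *\<^sub>R \<nu>) = 0" and b01: "0 \<le> \<beta>" "\<beta> \<le> 1"
      by (auto simp: Sset_def)
    have "\<beta> \<noteq> 0" using eq c0[OF a] by auto
    hence bpos: "\<beta> > 0" using b01 by simp
    hence b'pos: "\<beta>' > 0" using h by simp
    define t where "t = \<beta> / \<beta>'"
    have t01: "0 \<le> t" "t \<le> 1" using bpos b'pos h by (auto simp: t_def)
    define \<nu>' where "\<nu>' = (1 - t) *\<^sub>R \<mu>0 + t *\<^sub>R \<nu>"
    have nu': "\<nu>' \<in> belief_simplex" unfolding \<nu>'_def by (rule simplex_comb[OF prior nu t01])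
    have "(1 - \<beta>') *\<^sub>R \<mu>0 + \<beta>' *\<^sub>R \<nu>' = (1 - \<beta>) *\<^sub>R \<mu>0 + \<beta> *\<^sub>R \<nu>"
      using b'pos by (simp add: \<nu>'_def t_def vec_eq_iff field_simps)
    hence "du u a a0 \<bullet> ((1 - \<beta>') *\<^sub>R \<mu>0 + \<beta>' *\<^sub>R \<nu>') = 0" using eq by simp
    moreover have "\<beta>' \<in> {0..1}" using b'pos h by auto
    ultimately show "\<beta>' \<in> Sset u \<mu>0 a0" unfolding Sset_def using a nu' by blast
  qed

  have P2: "\<forall>\<beta>\<in>Sset u \<mu>0 a0. \<beta> \<ge> m / sqrt 2"
  proof
    fix \<beta> assume "\<beta> \<in> Sset u \<mu>0 a0"
    then obtain a \<nu> where a: "a \<noteq> a0" and nu: "\<nu> \<in> belief_simplex"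
      and eq: "du u a a0 \<bullet> ((1 - \<beta>) *\<^sub>R \<mu>0 + \<beta> *\<^sub>R \<nu>) = 0" and b01: "0 \<le> \<beta>" "\<beta> \<le> 1"
      by (auto simp: Sset_def)
    have "\<beta> \<noteq> 0" using eq c0[OF a] by auto
    hence bpos: "\<beta> > 0" using b01 by simp
    show "\<beta> \<ge> m / sqrt 2"
    proof (rule ccontr)
      assume "\<not> \<beta> \<ge> m / sqrt 2"
      hence tb: "\<beta> < m / sqrt 2" by simp
      define t where "t = m / sqrt 2"
      define z where "z = (1 - t) *\<^sub>R \<mu>0 + t *\<^sub>R \<nu>"
      have zA: "z \<in> A" unfolding z_def by (rule aff[OF muA inA[OF nu]])
      have tpos: "t \<ge> 0" using mpos by (simp add: t_def)
      have "z - \<mu>0 = t *\<^sub>R (\<nu> - \<mu>0)" by (simp add: z_def algebra_simps)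
      hence "dist \<mu>0 z = t * norm (\<nu> - \<mu>0)" using tpos by (metis dist_commute dist_norm norm_scaleR abs_of_nonneg)
      also have "\<dots> \<le> t * sqrt 2" using simplex_norm[OF prior nu] tpos by (simp add: mult_left_mono)
      also have "\<dots> = m" by (simp add: t_def)
      finally have "dist \<mu>0 z \<le> infdist \<mu>0 (rel_bd R)" using mR by linarith
      hence zR: "z \<in> R" unfolding R_def
        using ball_lemma[OF region_closed muR[unfolded R_def] muA[unfolded A_def] zA[unfolded A_def]] by blast
      define c where "c = du u a0 a \<bullet> \<mu>0"
      define g where "g = du u a0 a \<bullet> \<nu>"
      have cpos: "c > 0" using c0'[OF a] by (simp add: c_def)
      have "du u a0 a \<bullet> ((1 - \<beta>) *\<^sub>R \<mu>0 + \<beta> *\<^sub>R \<nu>) = 0"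
        using eq by (metis du_neg inner_minus_left neg_equal_0_iff_equal)
      hence e1: "(1 - \<beta>) * c + \<beta> * g = 0" by (simp add: inner_add_right c_def g_def)
      have zv: "du u a0 a \<bullet> z = (1 - t) * c + t * g" by (simp add: z_def inner_add_right c_def g_def)
      have "\<beta> * ((1 - t) * c + t * g) = \<beta> * (1 - t) * c + t * (\<beta> * g)" by (simp add: algebra_simps)
      also have "\<dots> = c * (\<beta> - t)"
      proof -
        have bg: "\<beta> * g = - ((1 - \<beta>) * c)" using e1 by linarith
        show ?thesis unfolding bg by (simp add: algebra_simps)
      qed
      finally have "\<beta> * ((1 - t) * c + t * g) < 0" using cpos tb by (simp add: t_def mult_pos_neg)
      hence "(1 - t) * c + t * g < 0" using bpos by (simp add: mult_less_0_iff)
      moreover have "du u a0 a \<bullet> z \<ge> 0" using zR a by (simp add: R_def default_region_def)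
      ultimately show False using zv by simp
    qed
  qed

  have P3: "\<forall>\<beta>. 0 < \<beta> \<and> \<beta> \<le> 1 \<and> (\<exists>\<pi>. lp_feasible u \<mu>0 a0 \<beta> \<pi> \<and> lp_obj \<mu>0 a0 \<pi> > 0)
             \<longrightarrow> lp_value u \<mu>0 a0 \<beta> \<ge> m / sqrt 2"
  proof (intro allI impI)
    fix \<beta> assume h: "0 < \<beta> \<and> \<beta> \<le> 1 \<and> (\<exists>\<pi>. lp_feasible u \<mu>0 a0 \<beta> \<pi> \<and> lp_obj \<mu>0 a0 \<pi> > 0)"
    then obtain \<pi> where feas: "lp_feasible u \<mu>0 a0 \<beta> \<pi>" and obj: "lp_obj \<mu>0 a0 \<pi> > 0" by blast
    have bpos: "0 < \<beta>" and b1: "\<beta> \<le> 1" using h by auto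
    have pnn: "\<And>b \<omega>. 0 \<le> \<pi> b \<omega>" using feas by (simp add: lp_feasible_def)
    obtain a where a: "a \<noteq> a0" and papos: "(\<Sum>\<omega>\<in>UNIV. \<pi> a \<omega> * \<mu>0 $ \<omega>) > 0"
    proof -
      have "\<not> (\<forall>b\<in>{b. b \<noteq> a0}. (\<Sum>\<omega>\<in>UNIV. \<pi> b \<omega> * \<mu>0 $ \<omega>) \<le> 0)"
      proof
        assume "\<forall>b\<in>{b. b \<noteq> a0}. (\<Sum>\<omega>\<in>UNIV. \<pi> b \<omega> * \<mu>0 $ \<omega>) \<le> 0"
        hence "lp_obj \<mu>0 a0 \<pi> \<le> 0" unfolding lp_obj_def by - (rule sum_nonpos, blast)
        thus False using obj by simp
      qed
      thus ?thesis using that by force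
    qed
    define pa where "pa = (\<Sum>\<omega>\<in>UNIV. \<pi> a \<omega> * \<mu>0 $ \<omega>)"
    have papos': "pa > 0" using papos by (simp add: pa_def)
    define \<nu>a :: "real^'w" where "\<nu>a = (\<chi> \<omega>. \<pi> a \<omega> * \<mu>0 $ \<omega> / pa)"
    have nua_c: "\<And>\<omega>. \<pi> a \<omega> * \<mu>0 $ \<omega> = pa * \<nu>a $ \<omega>" using papos' by (simp add: \<nu>a_def)
    have nua: "\<nu>a \<in> belief_simplex"
      unfolding belief_simplex_def \<nu>a_def
      using papos' pnn prior by (auto simp: pa_def sum_divide_distrib[symmetric] intro!: divide_nonneg_nonneg mult_nonneg_nonneg simplex_nonneg)
    have rep: "\<And>a'. lp_expr u \<mu>0 \<beta> \<pi> a a' = pa * (du u a a' \<bullet> ((1 - \<beta>) *\<^sub>R \<mu>0 + \<beta> *\<^sub>R \<nu>a))"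
      by (rule lp_expr_rep[where \<pi>=\<pi> and b=a and q=pa and \<rho>=\<nu>a, OF nua_c simplex_sum[OF nua]])
    define qa where "qa = (1 - \<beta>) *\<^sub>R \<mu>0 + \<beta> *\<^sub>R \<nu>a"
    have qa_eq: "du u a a0 \<bullet> qa = 0"
      using feas a rep[of a0] papos' by (simp add: lp_feasible_def qa_def)
    have qa_ge: "\<And>a'. a' \<noteq> a \<Longrightarrow> du u a a' \<bullet> qa \<ge> 0"
    proof -
      fix a' assume "a' \<noteq> a"
      hence "lp_expr u \<mu>0 \<beta> \<pi> a a' \<ge> 0" using feas by (simp add: lp_feasible_def)
      thus "du u a a' \<bullet> qa \<ge> 0" using rep[of a'] papos' by (simp add: qa_def zero_le_mult_iff)
    qed
    define d where "d = \<mu>0 - \<nu>a"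
    have dne: "d \<noteq> 0"
    proof
      assume "d = 0"
      hence "\<nu>a = \<mu>0" by (simp add: d_def)
      hence "qa = \<mu>0" by (simp add: qa_def algebra_simps)
      thus False using qa_eq c0[OF a] by simp
    qed
    define nd where "nd = norm d"
    have ndpos: "nd > 0" using dne by (simp add: nd_def)
    define y where "y = m / nd"
    have ypos: "y > 0" using mpos ndpos by (simp add: y_def)
    define x where "x = y / (1 + y)"
    have x01: "0 < x" "x < 1" using ypos by (auto simp: x_def)
    define \<nu>0 where "\<nu>0 = \<mu>0 + y *\<^sub>R d"
    have nu0A: "\<nu>0 \<in> A"
    proof -
      have "(1 - (- y)) *\<^sub>R \<mu>0 + (- y) *\<^sub>R \<nu>a \<in> A" by (rule aff[OF muA inA[OF nua]])
      moreover have "(1 - (- y)) *\<^sub>R \<mu>0 + (- y) *\<^sub>R \<nu>a = \<nu>0" by (simp add: \<nu>0_def d_def algebra_simps)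
      ultimately show ?thesis by simp
    qed
    have "dist \<mu>0 \<nu>0 = norm (y *\<^sub>R d)" by (simp add: \<nu>0_def dist_norm)
    also have "\<dots> = m" using ypos ndpos mpos by (simp add: nd_def y_def)
    finally have dnu0: "dist \<mu>0 \<nu>0 = m" .
    have nu0: "\<nu>0 \<in> belief_simplex"
      using ball_lemma[OF simplex_closed prior muA[unfolded A_def] nu0A[unfolded A_def]] dnu0 mS by simp
    define r where "r = (1 - \<beta>) *\<^sub>R \<mu>0 + \<beta> *\<^sub>R \<nu>0"
    have rA: "r \<in> A" unfolding r_def by (rule aff[OF muA nu0A])
    have "r - \<mu>0 = \<beta> *\<^sub>R (\<nu>0 - \<mu>0)" by (simp add: r_def algebra_simps)
    hence "dist \<mu>0 r = \<beta> * dist \<mu>0 \<nu>0" using bpos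
      by (metis dist_commute dist_norm norm_scaleR abs_of_pos)
    also have "\<dots> \<le> m" using dnu0 b1 mpos by (simp add: mult_left_le_one_le)
    finally have "dist \<mu>0 r \<le> infdist \<mu>0 (rel_bd R)" using mR by linarith
    hence rR: "r \<in> R" unfolding R_def
      using ball_lemma[OF region_closed muR[unfolded R_def] muA[unfolded A_def] rA[unfolded A_def]] by blast
    have "\<nu>0 - \<nu>a = (1 + y) *\<^sub>R d" by (simp add: \<nu>0_def d_def algebra_simps)
    hence "norm (\<nu>0 - \<nu>a) = (1 + y) * nd" using ypos by (simp add: nd_def)
    hence yb: "(1 + y) * nd \<le> sqrt 2" using simplex_norm[OF nua nu0] by simp
    have xy: "x * (1 + y) = y" using ypos by (simp add: x_def)
    have yn: "y * nd = m" using ndpos by (simp add: y_def)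
    have "x * ((1 + y) * nd) = m" using xy yn by (metis mult.assoc)
    hence "x = m / ((1 + y) * nd)" using ndpos ypos by (simp add: eq_divide_eq)
    also have "\<dots> \<ge> m / sqrt 2" using yb mpos ndpos ypos
      by (intro divide_left_mono) auto
    finally have xge: "x \<ge> m / sqrt 2" .
    have idn: "\<And>\<omega>. \<mu>0 $ \<omega> - x * \<nu>a $ \<omega> = (1 - x) * \<nu>0 $ \<omega>"
      using ypos by (simp add: x_def \<nu>0_def d_def field_simps)
    define \<pi>' where "\<pi>' = (\<lambda>b \<omega>. if b = a then x * \<pi> a \<omega> / pa
                          else if b = a0 then 1 - x * \<pi> a \<omega> / pa else 0)"
    have r_a: "\<And>\<omega>. \<pi>' a \<omega> * \<mu>0 $ \<omega> = x * \<nu>a $ \<omega>"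
      using nua_c papos' by (simp add: \<pi>'_def field_simps)
    have r_a0: "\<And>\<omega>. \<pi>' a0 \<omega> * \<mu>0 $ \<omega> = (1 - x) * \<nu>0 $ \<omega>"
    proof -
      fix \<omega>
      have "\<pi>' a0 \<omega> * \<mu>0 $ \<omega> = \<mu>0 $ \<omega> - x * (\<pi> a \<omega> * \<mu>0 $ \<omega>) / pa"
        using a by (simp add: \<pi>'_def algebra_simps)
      also have "\<dots> = \<mu>0 $ \<omega> - x * \<nu>a $ \<omega>" using nua_c[of \<omega>] papos' by simp
      finally show "\<pi>' a0 \<omega> * \<mu>0 $ \<omega> = (1 - x) * \<nu>0 $ \<omega>" using idn by simp
    qed
    have r_o: "\<And>b \<omega>. b \<noteq> a \<Longrightarrow> b \<noteq> a0 \<Longrightarrow> \<pi>' b \<omega> = 0" by (simp add: \<pi>'_def)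
    have feas': "lp_feasible u \<mu>0 a0 \<beta> \<pi>'"
      unfolding lp_feasible_def
    proof (intro conjI allI impI)
      fix b \<omega>
      show "0 \<le> \<pi>' b \<omega>"
      proof (cases "b = a")
        case True thus ?thesis using x01 papos' pnn by (simp add: \<pi>'_def)
      next
        case False
        show ?thesis
        proof (cases "b = a0")
          case True
          have "0 \<le> \<pi>' a0 \<omega> * \<mu>0 $ \<omega>" using r_a0 x01 simplex_nonneg[OF nu0] by simp
          thus ?thesis using True full_support by (simp add: zero_le_mult_iff) (meson not_less)
        next
          case False thus ?thesis using \<open>b \<noteq> a\<close> by (simp add: \<pi>'_def)
        qed
      qed
    next
      fix \<omega>
      have "(\<Sum>b\<in>UNIV. \<pi>' b \<omega>) = (\<Sum>b\<in>UNIV. (if b = a then x * \<pi> a \<omega> / pa else 0)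
                + (if b = a0 then 1 - x * \<pi> a \<omega> / pa else 0))"
        using a by (intro sum.cong) (auto simp: \<pi>'_def)
      also have "\<dots> = 1" by (simp add: sum.distrib)
      finally show "(\<Sum>b\<in>UNIV. \<pi>' b \<omega>) = 1" .
    next
      fix b a' :: 'a assume ba: "a' \<noteq> b"
      show "0 \<le> lp_expr u \<mu>0 \<beta> \<pi>' b a'"
      proof (cases "b = a")
        case True
        have "lp_expr u \<mu>0 \<beta> \<pi>' a a' = x * (du u a a' \<bullet> qa)"
          unfolding qa_def by (rule lp_expr_rep[where \<pi>=\<pi>' and b=a and q=x and \<rho>=\<nu>a, OF r_a simplex_sum[OF nua]])
        thus ?thesis using True ba qa_ge[of a'] x01 by simp
      next
        case False
        show ?thesis
        proof (cases "b = a0")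
          case True
          have "lp_expr u \<mu>0 \<beta> \<pi>' a0 a' = (1 - x) * (du u a0 a' \<bullet> r)"
            unfolding r_def by (rule lp_expr_rep[where \<pi>=\<pi>' and b=a0 and q="1-x" and \<rho>=\<nu>0, OF r_a0 simplex_sum[OF nu0]])
          moreover have "du u a0 a' \<bullet> r \<ge> 0" using rR ba True by (simp add: R_def default_region_def)
          ultimately show ?thesis using True x01 by simp
        next
          case False thus ?thesis using \<open>b \<noteq> a\<close> by (simp add: lp_expr_def r_o)
        qed
      qed
    next
      fix b assume b: "b \<noteq> a0"
      show "lp_expr u \<mu>0 \<beta> \<pi>' b a0 = 0"
      proof (cases "b = a")
        case True
        have "lp_expr u \<mu>0 \<beta> \<pi>' a a0 = x * (du u a a0 \<bullet> qa)"
          unfolding qa_def by (rule lp_expr_rep[where \<pi>=\<pi>' and b=a and q=x and \<rho>=\<nu>a, OF r_a simplex_sum[OF nua]])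
        thus ?thesis using True qa_eq by simp
      next
        case False thus ?thesis using b by (simp add: lp_expr_def r_o)
      qed
    qed
    have "lp_obj \<mu>0 a0 \<pi>' = (\<Sum>b\<in>{b. b \<noteq> a0}. if b = a then x else 0)"
      unfolding lp_obj_def
    proof (rule sum.cong)
      fix b assume "b \<in> {b. b \<noteq> a0}"
      show "(\<Sum>\<omega>\<in>UNIV. \<pi>' b \<omega> * \<mu>0 $ \<omega>) = (if b = a then x else 0)"
      proof (cases "b = a")
        case True
        thus ?thesis using r_a simplex_sum[OF nua] by (simp add: sum_distrib_left[symmetric])
      next
        case False thus ?thesis using \<open>b \<in> {b. b \<noteq> a0}\<close> r_o by simp
      qed
    qed simp
    also have "\<dots> = x" using a by simp
    finally have objx: "lp_obj \<mu>0 a0 \<pi>' = x" .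
    have bdd: "bdd_above (lp_obj \<mu>0 a0 ` {\<pi>. lp_feasible u \<mu>0 a0 \<beta> \<pi>})"
      using lp_obj_le1 prior by (intro bdd_aboveI[of _ 1]) auto
    have "lp_obj \<mu>0 a0 \<pi>' \<le> lp_value u \<mu>0 a0 \<beta>"
      unfolding lp_value_def by (rule cSUP_upper[OF _ bdd]) (simp add: feas')
    thus "lp_value u \<mu>0 a0 \<beta> \<ge> m / sqrt 2" using objx xge by simp
  qed

  have P2': "Sset u \<mu>0 a0 \<noteq> {} \<longrightarrow> Inf (Sset u \<mu>0 a0) \<ge> m / sqrt 2"
    using P2 by (auto intro: cInf_greatest)
  show ?thesis using P1 P2 P2' P3 by (simp add: m_def)
qed

end
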